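(* Let $(X,\tau)$ be a Hausdorff topological vector space over $\mathbb{R}$ which is quasi-point-separable. Then $X$ has the fixed point property: for every nonempty, compact, convex subset $C\subseteq X$ and every $\tau$-continuous mapping $f:C\to C$, there exists $x_0\in C$ with $f(x_0)=x_0$.
   Context: All vector spaces are real; $\theta$ denotes the origin of $X$ and $\mathbb{R}^+=[0,\infty)$. A function $u:X\to\mathbb{R}^+$ is called m-quasiconvex if $u(\theta)=0$ and for all $x_1,x_2\in X$ and $0\le\alpha\le1$ one has $u(\alpha x_1+(1-\alpha)x_2)\le\max\{u(x_1),u(x_2)\}$. A topological vector space $(X,\tau)$ is called quasi-point-separable if there is a family $\{u_\lambda\}_{\lambda\in\Lambda}$ of $\tau$-continuous m-quasiconvex functions on $X$ such that, for $x\in X$, $u_\lambda(x)=0$ for every $\lambda\in\Lambda$ implies $x=\theta$; such a family is called a quasi-point-separating space for $X$. *)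

theory Defs
  imports "HOL-Analysis.Analysis"
begin

definition tvs :: "'a::real_vector topology \<Rightarrow> bool" where
  "tvs T \<longleftrightarrow> topspace T = UNIV
     \<and> continuous_map (prod_topology T T) T (\<lambda>(x, y). x + y)
     \<and> continuous_map (prod_topology euclideanreal T) T (\<lambda>(a, x). a *\<^sub>R x)"

definition m_quasiconvex :: "('a::real_vector \<Rightarrow> real) \<Rightarrow> bool" where
  "m_quasiconvex u \<longleftrightarrow> (\<forall>x. u x \<ge> 0) \<and> u 0 = 0
     \<and> (\<forall>x1 x2 \<alpha>. 0 \<le> \<alpha> \<and> \<alpha> \<le> 1 \<longrightarrow>
           u (\<alpha> *\<^sub>R x1 + (1 - \<alpha>) *\<^sub>R x2) \<le> max (u x1) (u x2))"

definition quasi_point_separating :: "'a::real_vector topology \<Rightarrow> ('l \<Rightarrow> 'a \<Rightarrow> real) \<Rightarrow> 'l set \<Rightarrow> bool" where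
  "quasi_point_separating T u L \<longleftrightarrow>
     (\<forall>l\<in>L. continuous_map T euclideanreal (u l) \<and> m_quasiconvex (u l))
     \<and> (\<forall>x. (\<forall>l\<in>L. u l x = 0) \<longrightarrow> x = 0)"

text \<open>Index families by sets of functions (any indexed family can be replaced by its range).\<close>
definition quasi_point_separable :: "'a::real_vector topology \<Rightarrow> bool" where
  "quasi_point_separable T \<longleftrightarrow> (\<exists>U :: ('a \<Rightarrow> real) set. quasi_point_separating T (\<lambda>u. u) U)"

end

theory Submission
  imports Defs "HOL-Homology.Brouwer_Degree"
begin


lemma normalize_cont_nsphere:
  fixes A :: "'z \<Rightarrow> nat \<Rightarrow> real"
  assumes cA: "\<And>i. continuous_map X euclideanreal (\<lambda>z. A z i)"
    and nz: "\<And>z. z \<in> topspace X \<Longrightarrow> (\<Sum>k\<le>m. (A z k)^2) \<noteq> 0"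
    and zr: "\<And>z i. z \<in> topspace X \<Longrightarrow> i > m \<Longrightarrow> A z i = 0"
  shows "continuous_map X (nsphere m) (\<lambda>z i. A z i / sqrt (\<Sum>k\<le>m. (A z k)^2))"
proof -
  have "continuous_map X (powertop_real UNIV) (\<lambda>z i. A z i / sqrt (\<Sum>k\<le>m. (A z k)^2))"
    unfolding continuous_map_componentwise_UNIV
  proof
    fix i
    show "continuous_map X euclideanreal (\<lambda>z. A z i / sqrt (\<Sum>k\<le>m. (A z k)^2))"
      using nz by (intro continuous_intros cA) auto
  qed
  moreover have "(\<lambda>i. A z i / sqrt (\<Sum>k\<le>m. (A z k)^2)) \<in> {x. (\<Sum>i\<le>m. x i ^ 2) = 1 \<and> (\<forall>i>m. x i = 0)}"
    if z: "z \<in> topspace X" for z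
  proof -
    have pos: "(\<Sum>k\<le>m. (A z k)^2) > 0"
      using nz[OF z] by (metis (no_types, lifting) less_eq_real_def sum_nonneg zero_le_power2)
    have "(\<Sum>i\<le>m. (A z i / sqrt (\<Sum>k\<le>m. (A z k)^2)) ^ 2) = (\<Sum>i\<le>m. (A z i)^2) / (\<Sum>k\<le>m. (A z k)^2)"
      using pos by (simp add: power_divide sum_divide_distrib[symmetric])
    also have "\<dots> = 1" using pos by simp
    finally show ?thesis using zr[OF z] by auto
  qed
  ultimately show ?thesis
    unfolding nsphere by (auto simp: continuous_map_in_subtopology)
qed

lemma homotopic_with_True:
  "homotopic_with (\<lambda>x. True) X Y p q \<longleftrightarrow>
    (\<exists>h. continuous_map (prod_topology (top_of_set {0..1::real}) X) Y h \<and>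
       (\<forall>x\<in>topspace X. h(0,x) = p x) \<and> (\<forall>x\<in>topspace X. h(1,x) = q x))"
  by (subst homotopic_with) simp_all

lemma brouwer_disk:
  fixes g :: "(nat \<Rightarrow> real) \<Rightarrow> (nat \<Rightarrow> real)" and m :: nat
  defines "DD \<equiv> {x. (\<forall>i>m. x i = 0) \<and> (\<Sum>i\<le>m. (x i)^2) \<le> 1}"
  assumes cont: "\<And>i. continuous_map (subtopology (powertop_real UNIV) DD) euclideanreal (\<lambda>x. g x i)"
    and gD: "\<And>x. x \<in> DD \<Longrightarrow> g x \<in> DD"
  shows "\<exists>x\<in>DD. g x = x"
proof (rule ccontr)
  assume nf: "\<not> ?thesis"
  let ?P = "powertop_real UNIV"
  define SS :: "(nat\<Rightarrow>real) set" where "SS = {x. (\<Sum>i\<le>m. x i ^ 2) = 1 \<and> (\<forall>i>m. x i = 0)}"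
  have S: "nsphere m = subtopology ?P SS" by (simp add: nsphere SS_def)
  have SD: "SS \<subseteq> DD" by (auto simp: SS_def DD_def)
  let ?X = "prod_topology (top_of_set {0..1::real}) (nsphere m)"
  have topX: "topspace ?X = {0..1} \<times> SS" by (simp add: S)
  have c_t: "continuous_map ?X euclideanreal fst"
    by (metis continuous_map_fst continuous_map_into_fulltopology)
  have c_x: "continuous_map ?X euclideanreal (\<lambda>z. snd z i)" for i
  proof -
    have "continuous_map (nsphere m) euclideanreal (\<lambda>x. x i)"
      by (rule continuous_map_nsphere_projection)
    then show ?thesis
      using continuous_map_compose[OF continuous_map_snd] by (auto simp: o_def)
  qed
  have c_g: "continuous_map ?X euclideanreal (\<lambda>z. g (snd z) i)" for i
  proof -
    have "continuous_map (nsphere m) euclideanreal (\<lambda>x. g x i)"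
      unfolding S by (rule continuous_map_from_subtopology_mono[OF cont SD])
    then show ?thesis
      using continuous_map_compose[OF continuous_map_snd] by (auto simp: o_def)
  qed
  have c_tx: "continuous_map ?X (subtopology ?P DD) (\<lambda>z j. fst z * snd z j)"
  proof -
    have "continuous_map ?X ?P (\<lambda>z j. fst z * snd z j)"
      unfolding continuous_map_componentwise_UNIV
      by (intro allI continuous_intros c_t c_x)
    moreover have "(\<lambda>j. t * x j) \<in> DD" if "t \<in> {0..1}" "x \<in> SS" for t x
    proof -
      have "(\<Sum>i\<le>m. (t * x i)^2) = t^2 * (\<Sum>i\<le>m. (x i)^2)"
        by (simp add: power_mult_distrib sum_distrib_left)
      also have "\<dots> = t^2" using that by (simp add: SS_def)
      also have "\<dots> \<le> 1" using that by (simp add: power_le_one)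
      finally show ?thesis using that by (auto simp: DD_def SS_def)
    qed
    ultimately show ?thesis using topX by (auto simp: continuous_map_in_subtopology)
  qed
  have c_g2: "continuous_map ?X euclideanreal (\<lambda>z. g (\<lambda>j. fst z * snd z j) i)" for i
    using continuous_map_compose[OF c_tx cont[of i]] by (simp add: o_def)
  have nz1: "(\<Sum>k\<le>m. (snd z k - fst z * g (snd z) k)^2) \<noteq> 0" if z: "z \<in> topspace ?X" for z
  proof
    assume "(\<Sum>k\<le>m. (snd z k - fst z * g (snd z) k)^2) = 0"
    then have e: "\<forall>k\<le>m. snd z k = fst z * g (snd z) k"
      by (simp add: sum_nonneg_eq_0_iff)
    obtain t x where z': "z = (t,x)" and t: "t \<in> {0..1}" and x: "x \<in> SS" using z topX by auto
    have gx: "g x \<in> DD" using gD SD x by auto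
    have "1 = (\<Sum>k\<le>m. (x k)^2)" using x by (simp add: SS_def)
    also have "\<dots> = t^2 * (\<Sum>k\<le>m. (g x k)^2)"
      using e z' by (simp add: power_mult_distrib sum_distrib_left)
    also have "\<dots> \<le> t^2 * 1"
      using gx by (intro mult_left_mono) (auto simp: DD_def)
    finally have "1 \<le> t^2" by simp
    moreover have "t * t \<le> t * 1" using t by (intro mult_left_mono) auto
    ultimately have t1: "t = 1" using t by (simp add: power2_eq_square)
    have "g x = x"
    proof
      fix k show "g x k = x k"
        using e z' t1 gx x by (cases "k \<le> m") (auto simp: DD_def SS_def)
    qed
    then show False using nf x SD by auto
  qed
  have nz2: "(\<Sum>k\<le>m. (fst z * snd z k - g (\<lambda>j. fst z * snd z j) k)^2) \<noteq> 0" if z: "z \<in> topspace ?X" for z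
  proof
    assume "(\<Sum>k\<le>m. (fst z * snd z k - g (\<lambda>j. fst z * snd z j) k)^2) = 0"
    then have e: "\<forall>k\<le>m. fst z * snd z k = g (\<lambda>j. fst z * snd z j) k"
      by (simp add: sum_nonneg_eq_0_iff)
    obtain t x where z': "z = (t,x)" and t: "t \<in> {0..1}" and x: "x \<in> SS" using z topX by auto
    have "(\<lambda>j. fst z * snd z j) \<in> DD"
      using c_tx z unfolding continuous_map_in_subtopology Pi_iff by blast
    then have yD: "(\<lambda>j. t * x j) \<in> DD" using z' by simp
    then have gx: "g (\<lambda>j. t * x j) \<in> DD" using gD by auto
    have "g (\<lambda>j. t * x j) = (\<lambda>j. t * x j)"
    proof
      fix k show "g (\<lambda>j. t * x j) k = t * x k"
      proof (cases "k \<le> m")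
        case True then show ?thesis using e z' by simp
      next
        case False then have "k > m" by simp
        then have "g (\<lambda>j. t * x j) k = 0" "t * x k = 0" using gx yD unfolding DD_def by blast+
        then show ?thesis by simp
      qed
    qed
    then show False using nf yD by auto
  qed
  have zr1: "snd z i - fst z * g (snd z) i = 0" if "z \<in> topspace ?X" "i > m" for z i
  proof -
    have x: "snd z \<in> SS" using that(1) topX by (metis mem_Times_iff)
    then have "g (snd z) \<in> DD" using gD SD by blast
    then have "g (snd z) i = 0" using that(2) unfolding DD_def by blast
    moreover have "snd z i = 0" using x that(2) unfolding SS_def by blast
    ultimately show ?thesis by simp
  qed
  have zr2: "fst z * snd z i - g (\<lambda>j. fst z * snd z j) i = 0" if "z \<in> topspace ?X" "i > m" for z i
  proof -
    have yD: "(\<lambda>j. fst z * snd z j) \<in> DD"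
      using c_tx that unfolding continuous_map_in_subtopology Pi_iff by blast
    then have "g (\<lambda>j. fst z * snd z j) \<in> DD" using gD by blast
    then have "g (\<lambda>j. fst z * snd z j) i = 0" using that(2) unfolding DD_def by blast
    moreover have "fst z * snd z i = 0" using yD that(2) unfolding DD_def by blast
    ultimately show ?thesis by simp
  qed
  define nm where "nm = (\<lambda>a::nat\<Rightarrow>real. (\<lambda>i. a i / sqrt (\<Sum>k\<le>m. (a k)^2)))"
  have H1: "continuous_map ?X (nsphere m) (\<lambda>z. nm (\<lambda>i. snd z i - fst z * g (snd z) i))"
    unfolding nm_def
  proof (rule normalize_cont_nsphere[where A="\<lambda>z i. snd z i - fst z * g (snd z) i"])
    fix i show "continuous_map ?X euclideanreal (\<lambda>z. snd z i - fst z * g (snd z) i)"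
      by (intro continuous_map_diff continuous_map_real_mult c_t c_x c_g)
  qed (use nz1 zr1 in blast)+
  have H2: "continuous_map ?X (nsphere m) (\<lambda>z. nm (\<lambda>i. fst z * snd z i - g (\<lambda>j. fst z * snd z j) i))"
    unfolding nm_def
  proof (rule normalize_cont_nsphere[where A="\<lambda>z i. fst z * snd z i - g (\<lambda>j. fst z * snd z j) i"])
    fix i show "continuous_map ?X euclideanreal (\<lambda>z. fst z * snd z i - g (\<lambda>j. fst z * snd z j) i)"
      by (intro continuous_map_diff continuous_map_real_mult c_t c_x c_g2)
  qed (use nz2 zr2 in blast)+
  have hom1: "homotopic_with (\<lambda>x. True) (nsphere m) (nsphere m) id (\<lambda>x. nm (\<lambda>i. x i - g x i))"
    unfolding homotopic_with_True
  proof (intro exI conjI ballI)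
    show "continuous_map ?X (nsphere m) (\<lambda>z. nm (\<lambda>i. snd z i - fst z * g (snd z) i))"
      by (rule H1)
    fix x assume "x \<in> topspace (nsphere m)"
    then have "x \<in> SS" by (simp add: S)
    then show "(\<lambda>z. nm (\<lambda>i. snd z i - fst z * g (snd z) i)) (0, x) = id x"
      by (simp add: nm_def SS_def)
  next
    fix x show "(\<lambda>z. nm (\<lambda>i. snd z i - fst z * g (snd z) i)) (1, x) = nm (\<lambda>i. x i - g x i)"
      by simp
  qed
  have hom2: "homotopic_with (\<lambda>x. True) (nsphere m) (nsphere m) (\<lambda>x. nm (\<lambda>i. - g (\<lambda>j. 0) i)) (\<lambda>x. nm (\<lambda>i. x i - g x i))"
    unfolding homotopic_with_True
  proof (intro exI conjI ballI)
    show "continuous_map ?X (nsphere m) (\<lambda>z. nm (\<lambda>i. fst z * snd z i - g (\<lambda>j. fst z * snd z j) i))"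
      by (rule H2)
    fix x
    show "(\<lambda>z. nm (\<lambda>i. fst z * snd z i - g (\<lambda>j. fst z * snd z j) i)) (0, x) = nm (\<lambda>i. - g (\<lambda>j. 0) i)"
      by simp
    show "(\<lambda>z. nm (\<lambda>i. fst z * snd z i - g (\<lambda>j. fst z * snd z j) i)) (1, x) = nm (\<lambda>i. x i - g x i)"
      by simp
  qed
  have "contractible_space (nsphere m)"
    unfolding contractible_space_def
    using homotopic_with_trans[OF hom1 homotopic_with_symD[OF hom2]] by blast
  then show False using non_contractible_space_nsphere by blast
qed



lemma brouwer_simplex:
  fixes g :: "(nat \<Rightarrow> real) \<Rightarrow> (nat \<Rightarrow> real)" and n :: nat
  defines "SX \<equiv> {x. (\<forall>i\<ge>n. x i = 0) \<and> (\<forall>i. 0 \<le> x i) \<and> (\<Sum>i<n. x i) \<le> 1}"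
  assumes cont: "\<And>i. continuous_map (subtopology (powertop_real UNIV) SX) euclideanreal (\<lambda>x. g x i)"
    and gS: "\<And>x. x \<in> SX \<Longrightarrow> g x \<in> SX"
  shows "\<exists>x\<in>SX. g x = x"
proof (cases n)
  case 0
  have "(\<lambda>i. 0) \<in> SX" by (simp add: SX_def)
  moreover have "\<And>x. x \<in> SX \<Longrightarrow> x = (\<lambda>i. 0)" using 0 by (auto simp: SX_def)
  ultimately show ?thesis using gS by metis
next
  case (Suc m)
  let ?P = "powertop_real UNIV"
  define DD :: "(nat\<Rightarrow>real) set" where "DD \<equiv> {x. (\<forall>i>m. x i = 0) \<and> (\<Sum>i\<le>m. (x i)^2) \<le> 1}"
  have lt: "{..<n} = {..m}" using Suc by auto
  have SX': "SX = {x. (\<forall>i>m. x i = 0) \<and> (\<forall>i. 0 \<le> x i) \<and> (\<Sum>i\<le>m. x i) \<le> 1}"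
    unfolding SX_def lt using Suc by (auto simp: Suc_le_eq)
  define r where "r = (\<lambda>x::nat\<Rightarrow>real. \<lambda>i. max 0 (x i) / max 1 (\<Sum>k\<le>m. max 0 (x k)))"
  have SD: "SX \<subseteq> DD"
  proof
    fix x assume x: "x \<in> SX"
    have le1: "x i \<le> 1" if "i \<le> m" for i
    proof -
      have "x i \<le> (\<Sum>k\<le>m. x k)"
        using x that by (intro member_le_sum) (auto simp: SX')
      then show ?thesis using x by (auto simp: SX')
    qed
    have "(\<Sum>i\<le>m. (x i)^2) \<le> (\<Sum>i\<le>m. x i)"
    proof (rule sum_mono)
      fix i assume "i \<in> {..m}"
      then have "0 \<le> x i" "x i \<le> 1" using x le1 by (auto simp: SX')
      then show "(x i)^2 \<le> x i" by (simp add: power2_eq_square mult_left_le_one_le)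
    qed
    also have "\<dots> \<le> 1" using x by (simp add: SX')
    finally show "x \<in> DD" using x by (simp add: SX' DD_def)
  qed
  have rS: "r x \<in> SX" if "x \<in> DD" for x
  proof -
    have pos: "max 1 (\<Sum>k\<le>m. max 0 (x k)) > 0" by simp
    have "(\<Sum>i\<le>m. r x i) = (\<Sum>k\<le>m. max 0 (x k)) / max 1 (\<Sum>k\<le>m. max 0 (x k))"
      unfolding r_def by (simp add: sum_divide_distrib[symmetric])
    also have "\<dots> \<le> 1" using pos by (simp add: divide_le_eq_1)
    finally have "(\<Sum>i\<le>m. r x i) \<le> 1" .
    moreover have "\<forall>i>m. r x i = 0" using that by (simp add: r_def DD_def)
    moreover have "\<forall>i. 0 \<le> r x i" by (simp add: r_def)
    ultimately show ?thesis by (simp add: SX')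
  qed
  have rid: "r x = x" if "x \<in> SX" for x
  proof -
    have "max 1 (\<Sum>k\<le>m. max 0 (x k)) = 1"
      using that by (simp add: SX' max_absorb2)
    then show ?thesis using that by (simp add: r_def SX' max_absorb2 fun_eq_iff)
  qed
  have cr: "continuous_map (subtopology ?P DD) (subtopology ?P SX) r"
  proof -
    have cx: "continuous_map (subtopology ?P DD) euclideanreal (\<lambda>x. x i)" for i
      by (rule continuous_map_from_subtopology[OF continuous_map_product_projection]) simp
    have "continuous_map (subtopology ?P DD) ?P r"
      unfolding continuous_map_componentwise_UNIV r_def
      by (intro allI continuous_map_real_divide continuous_map_real_max continuous_map_sum cx
          continuous_map_canonical_const) auto
    then show ?thesis using rS by (auto simp: continuous_map_in_subtopology)
  qed
  have cg: "continuous_map (subtopology ?P DD) euclideanreal (\<lambda>x. g (r x) i)" for i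
    using continuous_map_compose[OF cr cont[of i]] by (simp add: o_def)
  have gD: "g (r x) \<in> DD" if "x \<in> DD" for x
    using SD gS rS that by blast
  obtain x where x: "x \<in> DD" and fx: "g (r x) = x"
    using brouwer_disk[of m "\<lambda>x. g (r x)"] cg gD unfolding DD_def by blast
  have "x \<in> SX" using gS rS x fx by metis
  then show ?thesis using fx rid by metis
qed



lemma tvs_top: "tvs T \<Longrightarrow> topspace T = UNIV"
  by (simp add: tvs_def)

lemma tvs_add:
  assumes "tvs T" "continuous_map Z T F" "continuous_map Z T G"
  shows "continuous_map Z T (\<lambda>z. F z + G z)"
proof -
  have "continuous_map Z (prod_topology T T) (\<lambda>z. (F z, G z))"
    using assms by (intro continuous_map_pairedI)
  moreover have "continuous_map (prod_topology T T) T (\<lambda>(x, y). x + y)"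
    using assms(1) by (simp add: tvs_def)
  ultimately show ?thesis
    using continuous_map_compose by (fastforce simp: o_def)
qed

lemma tvs_scale:
  assumes "tvs T" "continuous_map Z euclideanreal a" "continuous_map Z T F"
  shows "continuous_map Z T (\<lambda>z. a z *\<^sub>R F z)"
proof -
  have "continuous_map Z (prod_topology euclideanreal T) (\<lambda>z. (a z, F z))"
    using assms by (intro continuous_map_pairedI)
  moreover have "continuous_map (prod_topology euclideanreal T) T (\<lambda>(a, x). a *\<^sub>R x)"
    using assms(1) by (simp add: tvs_def)
  ultimately show ?thesis
    using continuous_map_compose by (fastforce simp: o_def)
qed

lemma tvs_const: "tvs T \<Longrightarrow> continuous_map Z T (\<lambda>z. c)"
  by (simp add: tvs_def)

lemma tvs_diff:
  assumes "tvs T" "continuous_map Z T F" "continuous_map Z T G"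
  shows "continuous_map Z T (\<lambda>z. F z - G z)"
proof -
  have "continuous_map Z T (\<lambda>z. F z + (-1) *\<^sub>R G z)"
    by (intro tvs_add tvs_scale assms continuous_map_canonical_const)
  then show ?thesis by simp
qed

lemma tvs_sum:
  assumes "tvs T" "finite A" "\<And>j. j \<in> A \<Longrightarrow> continuous_map Z euclideanreal (a j)"
  shows "continuous_map Z T (\<lambda>z. \<Sum>j\<in>A. a j z *\<^sub>R v j)"
  using assms(2,3)
proof (induction A rule: finite_induct)
  case empty
  then show ?case using tvs_const[OF assms(1)] by simp
next
  case (insert j A)
  have "continuous_map Z T (\<lambda>z. a j z *\<^sub>R v j + (\<Sum>j\<in>A. a j z *\<^sub>R v j))"
    using insert by (intro tvs_add[OF assms(1)] tvs_scale[OF assms(1)] tvs_const[OF assms(1)]) auto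
  then show ?case using insert by simp
qed



theorem theorem4p1:
  fixes T :: "'a::real_vector topology"
  assumes "tvs T" and "Hausdorff_space T" and "quasi_point_separable T"
  shows "\<forall>C f. C \<noteq> {} \<and> compactin T C \<and> convex C
           \<and> continuous_map (subtopology T C) (subtopology T C) f
           \<longrightarrow> (\<exists>x0\<in>C. f x0 = x0)"
proof (intro allI impI)
  fix C f
  assume H: "C \<noteq> {} \<and> compactin T C \<and> convex C \<and> continuous_map (subtopology T C) (subtopology T C) f"
  have Cne: "C \<noteq> {}" and cpt: "compactin T C" and cvx: "convex C"
    and fc: "continuous_map (subtopology T C) (subtopology T C) f" using H by auto
  have tvs: "tvs T" by (rule assms(1))
  have top: "topspace T = UNIV" using tvs by (rule tvs_top)
  show "\<exists>x0\<in>C. f x0 = x0"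
  proof (rule ccontr)
    assume nf: "\<not> (\<exists>x0\<in>C. f x0 = x0)"
    obtain U where U: "quasi_point_separating T (\<lambda>u. u) U"
      using assms(3) by (auto simp: quasi_point_separable_def)
    have Ucont: "\<And>u. u \<in> U \<Longrightarrow> continuous_map T euclideanreal u"
      and Uq: "\<And>u. u \<in> U \<Longrightarrow> m_quasiconvex u"
      and Usep: "\<And>x. (\<forall>u\<in>U. u x = 0) \<Longrightarrow> x = 0"
      using U by (auto simp: quasi_point_separating_def)
    have Unn: "\<And>u x. u \<in> U \<Longrightarrow> 0 \<le> u x" and U0: "\<And>u. u \<in> U \<Longrightarrow> u 0 = 0"
      and Uqc: "\<And>u x1 x2 a. u \<in> U \<Longrightarrow> 0 \<le> a \<Longrightarrow> a \<le> 1 \<Longrightarrow>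
                 u (a *\<^sub>R x1 + (1 - a) *\<^sub>R x2) \<le> max (u x1) (u x2)"
      using Uq unfolding m_quasiconvex_def by blast+
    have topC: "topspace (subtopology T C) = C" using top by simp
    have fC: "\<And>x. x \<in> C \<Longrightarrow> f x \<in> C"
      using fc topC unfolding continuous_map_def by auto
    have fcT: "continuous_map (subtopology T C) T f"
      using fc continuous_map_into_fulltopology by blast
    have idC: "continuous_map (subtopology T C) T (\<lambda>y. y)"
      by (rule continuous_map_from_subtopology[OF continuous_map_id[unfolded id_def]])
    define K where "K = (\<lambda>y. y - f y) ` C"
    have cK: "continuous_map (subtopology T C) T (\<lambda>y. y - f y)"
      by (rule tvs_diff[OF tvs idC fcT])
    have Kc: "compactin T K"
      unfolding K_def using image_compactin[OF _ cK] cpt by (simp add: compactin_subtopology)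
    have K0: "\<And>w. w \<in> K \<Longrightarrow> w \<noteq> 0"
      using nf unfolding K_def by auto
    have Kne: "K \<noteq> {}" using Cne K_def by simp
    define O1 :: "('a \<Rightarrow> real) \<Rightarrow> 'a set" where "O1 = (\<lambda>u. {w \<in> topspace T. u w \<in> {0<..}})"
    have O1open: "\<And>u. u \<in> U \<Longrightarrow> openin T (O1 u)"
      unfolding O1_def using Ucont openin_continuous_map_preimage open_greaterThan open_openin by blast
    have Kcov: "K \<subseteq> \<Union>(O1 ` U)"
    proof
      fix w assume w: "w \<in> K"
      then have "\<not> (\<forall>u\<in>U. u w = 0)" using K0 Usep by blast
      then obtain u where "u \<in> U" "u w \<noteq> 0" by blast
      then have "u w > 0" using Unn[of u w] by simp
      then show "w \<in> \<Union>(O1 ` U)" using \<open>u \<in> U\<close> top by (auto simp: O1_def)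
    qed
    obtain F where F: "finite F" "F \<subseteq> O1 ` U" "K \<subseteq> \<Union>F"
      using Kc Kcov O1open unfolding compactin_def by (metis (no_types, lifting) imageE)
    obtain U0 where U0U: "U0 \<subseteq> U" and finU0: "finite U0" and FU0: "F = O1 ` U0"
      using finite_subset_image[OF F(1,2)] by blast
    have KU0: "\<And>w. w \<in> K \<Longrightarrow> \<exists>u\<in>U0. u w > 0"
      using F(3) FU0 by (auto simp: O1_def)
    have U0ne: "U0 \<noteq> {}" using Kne KU0 by blast
    define s where "s = (\<lambda>w. \<Sum>u\<in>U0. u w)"
    have scont: "continuous_map T euclideanreal s"
      unfolding s_def using U0U Ucont finU0 by (intro continuous_map_sum) auto
    have "compact (s ` K)"
      using image_compactin[OF Kc scont] by simp
    then obtain sw where sw: "sw \<in> s ` K" and swmin: "\<And>t. t \<in> s ` K \<Longrightarrow> sw \<le> t"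
      using compact_attains_inf[of "s ` K"] Kne by blast
    obtain w0 where w0: "w0 \<in> K" "sw = s w0" using sw by blast
    have spos: "s w0 > 0"
    proof -
      obtain u where u: "u \<in> U0" "u w0 > 0" using KU0 w0 by blast
      have "u w0 \<le> s w0" unfolding s_def
        using u finU0 U0U Unn by (intro member_le_sum) auto
      then show ?thesis using u by simp
    qed
    define \<epsilon> where "\<epsilon> = s w0 / real (card U0)"
    have cardpos: "real (card U0) > 0" using finU0 U0ne by (simp add: card_gt_0_iff)
    have epos: "\<epsilon> > 0" unfolding \<epsilon>_def using spos cardpos by simp
    have Kfar: "\<And>w. w \<in> K \<Longrightarrow> \<exists>u\<in>U0. \<epsilon> \<le> u w"
    proof (rule ccontr)
      fix w assume w: "w \<in> K" and nk: "\<not> (\<exists>u\<in>U0. \<epsilon> \<le> u w)"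
      have lt: "\<And>u. u \<in> U0 \<Longrightarrow> u w < \<epsilon>" using nk by (simp add: not_le)
      have "s w < (\<Sum>u\<in>U0. \<epsilon>)" unfolding s_def
        using lt by (rule sum_strict_mono[OF finU0 U0ne])
      also have "\<dots> = s w0" using cardpos by (simp add: \<epsilon>_def)
      also have "\<dots> \<le> s w" using swmin[of "s w"] w w0(2) by blast
      finally show False by simp
    qed
    define V where "V = {v. \<forall>u\<in>U0. u v < \<epsilon>}"
    have Vconv: "convex V"
      unfolding convex_def
    proof (intro ballI allI impI)
      fix x y :: 'a and a b :: real
      assume x: "x \<in> V" and y: "y \<in> V" and ab: "0 \<le> a" "0 \<le> b" "a + b = 1"
      show "a *\<^sub>R x + b *\<^sub>R y \<in> V"
        unfolding V_def
      proof (intro CollectI ballI)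
        fix u assume u: "u \<in> U0"
        have "u (a *\<^sub>R x + (1 - a) *\<^sub>R y) \<le> max (u x) (u y)"
          using Uqc[of u a x y] u U0U ab by auto
        also have "\<dots> < \<epsilon>" using x y u by (simp add: V_def)
        finally have "u (a *\<^sub>R x + (1 - a) *\<^sub>R y) < \<epsilon>" .
        moreover have "b = 1 - a" using ab(3) by simp
        ultimately show "u (a *\<^sub>R x + b *\<^sub>R y) < \<epsilon>" by simp
      qed
    qed
    have KV: "\<And>w. w \<in> K \<Longrightarrow> w \<notin> V"
      using Kfar unfolding V_def by force
    define \<phi> where "\<phi> = (\<lambda>c y. \<Prod>u\<in>U0. max 0 (\<epsilon> - u (c - y)))"
    have \<phi>nn: "\<And>c y. 0 \<le> \<phi> c y"
      unfolding \<phi>_def by (intro prod_nonneg) auto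
    have \<phi>pos: "\<And>c y. \<phi> c y > 0 \<longleftrightarrow> c - y \<in> V"
    proof -
      fix c y
      show "\<phi> c y > 0 \<longleftrightarrow> c - y \<in> V"
      proof
        assume "c - y \<in> V"
        then show "\<phi> c y > 0" unfolding \<phi>_def V_def by (intro prod_pos) auto
      next
        assume p: "\<phi> c y > 0"
        show "c - y \<in> V" unfolding V_def
        proof (intro CollectI ballI)
          fix u assume u: "u \<in> U0"
          show "u (c - y) < \<epsilon>"
          proof (rule ccontr)
            assume "\<not> u (c - y) < \<epsilon>"
            then have "max 0 (\<epsilon> - u (c - y)) = 0" by simp
            then have "\<phi> c y = 0" unfolding \<phi>_def using u finU0 by (simp add: prod_zero_iff) blast
            then show False using p by simp
          qed
        qed
      qed
    qed
    have \<phi>cont: "\<And>c. continuous_map T euclideanreal (\<phi> c)"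
    proof -
      fix c
      have cm: "continuous_map T T (\<lambda>y. c - y)"
        by (rule tvs_diff[OF tvs tvs_const[OF tvs] continuous_map_id[unfolded id_def]])
      have "continuous_map T euclideanreal (\<lambda>y. u (c - y))" if "u \<in> U0" for u
        using continuous_map_compose[OF cm Ucont[of u]] that U0U by (auto simp: o_def)
      then show "continuous_map T euclideanreal (\<phi> c)"
        unfolding \<phi>_def using finU0
        by (intro continuous_map_prod continuous_map_real_max continuous_map_diff continuous_map_canonical_const) auto
    qed
    define O2 where "O2 = (\<lambda>c. {y \<in> topspace T. \<phi> c y \<in> {0<..}})"
    have O2open: "\<And>c. openin T (O2 c)"
      unfolding O2_def using \<phi>cont openin_continuous_map_preimage open_greaterThan open_openin by blast
    have CV0: "0 \<in> V" unfolding V_def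
    proof (intro CollectI ballI)
      fix u assume "u \<in> U0"
      then have "u 0 = 0" using U0U U0 by blast
      then show "u 0 < \<epsilon>" using epos by simp
    qed
    have Ccov: "C \<subseteq> \<Union>(O2 ` C)"
    proof
      fix c assume c: "c \<in> C"
      have "\<phi> c c > 0" using \<phi>pos CV0 by simp
      then show "c \<in> \<Union>(O2 ` C)" using c top by (auto simp: O2_def)
    qed
    obtain F2 where F2: "finite F2" "F2 \<subseteq> O2 ` C" "C \<subseteq> \<Union>F2"
      using cpt Ccov O2open unfolding compactin_def by (metis (no_types, lifting) imageE)
    obtain S0 where S0C: "S0 \<subseteq> C" and finS0: "finite S0" and FS0: "F2 = O2 ` S0"
      using finite_subset_image[OF F2(1,2)] by blast
    have CS0: "\<And>y. y \<in> C \<Longrightarrow> \<exists>c\<in>S0. \<phi> c y > 0"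
      using F2(3) FS0 by (auto simp: O2_def)
    obtain M :: nat and x :: "nat \<Rightarrow> 'a" where S0x: "S0 = x ` {i. i < M}"
      using finite_imp_nat_seg_image_inj_on[OF finS0] by blast
    have "M \<noteq> 0" using S0x CS0 Cne by fastforce
    then obtain N where MN: "M = Suc N" using not0_implies_Suc by blast
    have lessM: "{i. i < M} = {..N}" using MN by auto
    have xC: "\<And>j. j \<le> N \<Longrightarrow> x j \<in> C" using S0x S0C lessM by auto
    have covx: "\<And>y. y \<in> C \<Longrightarrow> \<exists>j\<le>N. \<phi> (x j) y > 0"
      using CS0 S0x lessM by fastforce
    define \<Phi> where "\<Phi> = (\<lambda>y. \<Sum>j\<le>N. \<phi> (x j) y)"
    have \<Phi>pos: "\<And>y. y \<in> C \<Longrightarrow> \<Phi> y > 0"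
    proof -
      fix y assume "y \<in> C"
      then obtain j where j: "j \<le> N" "\<phi> (x j) y > 0" using covx by blast
      have "\<phi> (x j) y \<le> \<Phi> y" unfolding \<Phi>_def using j \<phi>nn by (intro member_le_sum) auto
      then show "\<Phi> y > 0" using j by simp
    qed
    define \<psi> where "\<psi> = (\<lambda>j y. \<phi> (x j) y / \<Phi> y)"
    have \<psi>nn: "\<And>j y. 0 \<le> \<psi> j y"
      unfolding \<psi>_def \<Phi>_def using \<phi>nn by (simp add: sum_nonneg)
    have \<psi>sum: "\<And>y. y \<in> C \<Longrightarrow> (\<Sum>j\<le>N. \<psi> j y) = 1"
    proof -
      fix y assume "y \<in> C"
      then have "\<Phi> y > 0" by (rule \<Phi>pos)
      then show "(\<Sum>j\<le>N. \<psi> j y) = 1"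
        unfolding \<psi>_def by (simp add: sum_divide_distrib[symmetric] \<Phi>_def)
    qed
    have \<psi>cont: "\<And>j. continuous_map (subtopology T C) euclideanreal (\<psi> j)"
    proof -
      fix j
      have \<Phi>ne: "\<And>y. y \<in> topspace (subtopology T C) \<Longrightarrow> (\<Sum>j\<le>N. \<phi> (x j) y) \<noteq> 0"
        using \<Phi>pos topC unfolding \<Phi>_def by (metis less_irrefl)
      have a: "continuous_map (subtopology T C) euclideanreal (\<phi> c)" for c
        by (rule continuous_map_from_subtopology[OF \<phi>cont])
      show "continuous_map (subtopology T C) euclideanreal (\<psi> j)"
        unfolding \<psi>_def[abs_def] \<Phi>_def
        by (intro continuous_map_real_divide a continuous_map_sum \<Phi>ne) auto
    qed
    let ?P = "powertop_real UNIV"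
    define SX :: "(nat \<Rightarrow> real) set" where
      "SX = {x. (\<forall>i\<ge>N. x i = 0) \<and> (\<forall>i. 0 \<le> x i) \<and> (\<Sum>i<N. x i) \<le> 1}"
    define w where "w = (\<lambda>(l::nat\<Rightarrow>real) j. if j < N then l j else 1 - (\<Sum>i<N. l i))"
    define z where "z = (\<lambda>l. \<Sum>j\<le>N. w l j *\<^sub>R x j)"
    have atM: "{..N} = insert N {..<N}" by auto
    have wsum: "\<And>l. (\<Sum>j\<le>N. w l j) = 1"
      unfolding atM w_def by simp
    have wnn: "\<And>l j. l \<in> SX \<Longrightarrow> 0 \<le> w l j"
      unfolding w_def SX_def by auto
    have zC: "\<And>l. l \<in> SX \<Longrightarrow> z l \<in> C"
      unfolding z_def using cvx wsum wnn xC by (intro convex_sum) auto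
    have wcont: "\<And>j. continuous_map (subtopology ?P SX) euclideanreal (\<lambda>l. w l j)"
    proof -
      fix j
      have cx: "continuous_map (subtopology ?P SX) euclideanreal (\<lambda>l. l i)" for i
        by (rule continuous_map_from_subtopology[OF continuous_map_product_projection]) simp
      show "continuous_map (subtopology ?P SX) euclideanreal (\<lambda>l. w l j)"
      proof (cases "j < N")
        case True then show ?thesis unfolding w_def using cx by simp
      next
        case False
        then show ?thesis unfolding w_def
          by (simp, intro continuous_map_diff continuous_map_canonical_const continuous_map_sum cx) auto
      qed
    qed
    have zcont: "continuous_map (subtopology ?P SX) (subtopology T C) z"
    proof -
      have "continuous_map (subtopology ?P SX) T z"
        unfolding z_def using wcont by (intro tvs_sum[OF tvs]) auto
      then show ?thesis using zC by (simp add: continuous_map_in_subtopology Pi_iff)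
    qed
    define G where "G = (\<lambda>l i. if i < N then \<psi> i (f (z l)) else 0)"
    have Gcont: "\<And>i. continuous_map (subtopology ?P SX) euclideanreal (\<lambda>l. G l i)"
    proof -
      fix i
      have fz: "continuous_map (subtopology ?P SX) (subtopology T C) (\<lambda>l. f (z l))"
        using continuous_map_compose[OF zcont fc] by (simp add: o_def)
      show "continuous_map (subtopology ?P SX) euclideanreal (\<lambda>l. G l i)"
      proof (cases "i < N")
        case True
        then show ?thesis unfolding G_def
          using continuous_map_compose[OF fz \<psi>cont[of i]] by (simp add: o_def)
      next
        case False then show ?thesis unfolding G_def by simp
      qed
    qed
    have GS: "\<And>l. l \<in> SX \<Longrightarrow> G l \<in> SX"
    proof -
      fix l assume l: "l \<in> SX"
      have y: "f (z l) \<in> C" using fC zC l by blast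
      have "(\<Sum>i<N. G l i) = (\<Sum>i<N. \<psi> i (f (z l)))" unfolding G_def by simp
      also have "\<dots> \<le> (\<Sum>i\<le>N. \<psi> i (f (z l)))"
        using \<psi>nn by (intro sum_mono2) auto
      also have "\<dots> = 1" using \<psi>sum y by blast
      finally show "G l \<in> SX" unfolding SX_def G_def using \<psi>nn by auto
    qed
    obtain l where l: "l \<in> SX" and Gl: "G l = l"
      using brouwer_simplex[of N G] Gcont GS unfolding SX_def by blast
    define y where "y = f (z l)"
    have yC: "y \<in> C" unfolding y_def using fC zC l by blast
    have w\<psi>: "\<And>j. j \<le> N \<Longrightarrow> w l j = \<psi> j y"
    proof -
      fix j assume j: "j \<le> N"
      have lt: "\<And>i. i < N \<Longrightarrow> l i = \<psi> i y"
        using Gl unfolding G_def y_def by (metis (mono_tags, lifting))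
      show "w l j = \<psi> j y"
      proof (cases "j < N")
        case True then show ?thesis using lt by (simp add: w_def)
      next
        case False
        then have jN: "j = N" using j by simp
        have "(\<Sum>i\<le>N. \<psi> i y) = \<psi> N y + (\<Sum>i<N. \<psi> i y)" unfolding atM by simp
        then have "\<psi> N y = 1 - (\<Sum>i<N. \<psi> i y)" using \<psi>sum[OF yC] by simp
        also have "\<dots> = 1 - (\<Sum>i<N. l i)" using lt by simp
        finally show ?thesis using jN by (simp add: w_def)
      qed
    qed
    have zl: "z l = (\<Sum>j\<le>N. \<psi> j y *\<^sub>R x j)"
      unfolding z_def using w\<psi> by simp
    have "z l - y = (\<Sum>j\<le>N. \<psi> j y *\<^sub>R x j) - (\<Sum>j\<le>N. \<psi> j y) *\<^sub>R y"
      using zl \<psi>sum[OF yC] by simp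
    also have "\<dots> = (\<Sum>j\<le>N. \<psi> j y *\<^sub>R (x j - y))"
      by (simp add: scaleR_diff_right sum_subtractf scaleR_sum_left)
    finally have zy: "z l - y = (\<Sum>j\<le>N. \<psi> j y *\<^sub>R (x j - y))" .
    define A where "A = {j \<in> {..N}. \<psi> j y > 0}"
    have AN: "A \<subseteq> {..N}" unfolding A_def by auto
    have out0: "\<And>j. j \<in> {..N} - A \<Longrightarrow> \<psi> j y = 0"
      unfolding A_def using \<psi>nn by (metis (mono_tags, lifting) DiffE le_less mem_Collect_eq)
    have sA: "(\<Sum>j\<in>A. \<psi> j y) = 1"
    proof -
      have "(\<Sum>j\<in>A. \<psi> j y) = (\<Sum>j\<le>N. \<psi> j y)"
        using AN out0 by (intro sum.mono_neutral_left) auto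
      then show ?thesis using \<psi>sum[OF yC] by simp
    qed
    have vA: "(\<Sum>j\<in>A. \<psi> j y *\<^sub>R (x j - y)) = (\<Sum>j\<le>N. \<psi> j y *\<^sub>R (x j - y))"
      using AN out0 by (intro sum.mono_neutral_left) auto
    have inV: "\<And>j. j \<in> A \<Longrightarrow> x j - y \<in> V"
    proof -
      fix j assume "j \<in> A"
      then have "\<psi> j y > 0" by (simp add: A_def)
      then have "\<phi> (x j) y > 0" unfolding \<psi>_def using \<Phi>pos[OF yC] \<phi>nn
        by (metis divide_le_0_iff le_less not_le)
      then show "x j - y \<in> V" using \<phi>pos by blast
    qed
    have "(\<Sum>j\<in>A. \<psi> j y *\<^sub>R (x j - y)) \<in> V"
      using AN sA \<psi>nn inV Vconv by (intro convex_sum) (auto intro: finite_subset)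
    then have "z l - f (z l) \<in> V" using vA zy y_def by simp
    moreover have "z l - f (z l) \<in> K" unfolding K_def using zC l by blast
    ultimately show False using KV by blast
  qed
qed


end
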